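(* Let $\mu$ be a Lévy measure as in the context, and let $\phi,\psi\in L^\infty(\mathbb{R}^d\times\mathbb{R}^d)$ be functions of $(x,y)$ with $\psi$ compactly supported. If $\mathcal B_{x+y}[\phi,\psi]$, $\mathcal B_{x,x+y}[\phi,\psi]$ and $\mathcal B_{y,x+y}[\phi,\psi]$ are well-defined in $L^1(\mathbb{R}^d\times\mathbb{R}^d)$, then $$\int_{\mathbb{R}^d\times\mathbb{R}^d}\mathcal B_{x+y}[\phi,\psi]\,dx\,dy=\int_{\mathbb{R}^d\times\mathbb{R}^d}\big(\mathcal B_{x,x+y}[\phi,\psi]+\mathcal B_{y,x+y}[\phi,\psi]\big)\,dx\,dy.$$
   Context: $\mu$ is a symmetric nonnegative Radon measure on $\mathbb{R}^d\setminus\{0\}$ with $\int(|z|^2\wedge1)\,d\mu(z)<\infty$. For bounded measurable $\phi,\psi$ on $\mathbb{R}^d\times\mathbb{R}^d$ and $r>0$ define $\mathcal B^{\ge r}_{x+y}[\phi,\psi](x,y)=\frac12\int_{|z|\ge r}(\phi(x+z,y+z)-\phi(x,y))(\psi(x+z,y+z)-\psi(x,y))\,d\mu(z)$, $\mathcal B^{\ge r}_{x,x+y}[\phi,\psi](x,y)=\frac12\int_{|z|\ge r}(\phi(x+z,y)-\phi(x,y))(\psi(x+z,y+z)-\psi(x,y))\,d\mu(z)$, $\mathcal B^{\ge r}_{y,x+y}[\phi,\psi](x,y)=\frac12\int_{|z|\ge r}(\phi(x,y+z)-\phi(x,y))(\psi(x+z,y+z)-\psi(x,y))\,d\mu(z)$.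 Each of $\mathcal B_{x+y},\mathcal B_{x,x+y},\mathcal B_{y,x+y}$ is "well-defined in $L^1$" if the corresponding limit as $r\to0$ exists in $L^1(\mathbb{R}^d\times\mathbb{R}^d)$, and then denotes that limit. *)

theory Defs
  imports "HOL-Analysis.Analysis"
begin

text \<open>Levy measure on R^d (type 'a), not charging the origin, i.e. a measure on R^d minus 0.\<close>
definition levy_measure :: "'a::euclidean_space measure \<Rightarrow> bool" where
  "levy_measure \<mu> \<longleftrightarrow>
     sets \<mu> = sets borel \<and>
     emeasure \<mu> {0} = 0 \<and>
     distr \<mu> borel uminus = \<mu> \<and>
     (\<forall>K. compact K \<and> 0 \<notin> K \<longrightarrow> emeasure \<mu> K < \<infinity>) \<and>
     integrable \<mu> (\<lambda>z. min ((norm z)\<^sup>2) 1)"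

definition B_sum_ge :: "'a::euclidean_space measure \<Rightarrow> ('a \<times> 'a \<Rightarrow> real) \<Rightarrow> ('a \<times> 'a \<Rightarrow> real)
    \<Rightarrow> real \<Rightarrow> 'a \<times> 'a \<Rightarrow> real" where
  "B_sum_ge \<mu> \<phi> \<psi> r p = (case p of (x, y) \<Rightarrow>
     (1/2) * (\<integral>z. indicator {z. r \<le> norm z} z *
        ((\<phi> (x + z, y + z) - \<phi> (x, y)) * (\<psi> (x + z, y + z) - \<psi> (x, y))) \<partial>\<mu>))"

definition B_x_sum_ge :: "'a::euclidean_space measure \<Rightarrow> ('a \<times> 'a \<Rightarrow> real) \<Rightarrow> ('a \<times> 'a \<Rightarrow> real)
    \<Rightarrow> real \<Rightarrow> 'a \<times> 'a \<Rightarrow> real" where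
  "B_x_sum_ge \<mu> \<phi> \<psi> r p = (case p of (x, y) \<Rightarrow>
     (1/2) * (\<integral>z. indicator {z. r \<le> norm z} z *
        ((\<phi> (x + z, y) - \<phi> (x, y)) * (\<psi> (x + z, y + z) - \<psi> (x, y))) \<partial>\<mu>))"

definition B_y_sum_ge :: "'a::euclidean_space measure \<Rightarrow> ('a \<times> 'a \<Rightarrow> real) \<Rightarrow> ('a \<times> 'a \<Rightarrow> real)
    \<Rightarrow> real \<Rightarrow> 'a \<times> 'a \<Rightarrow> real" where
  "B_y_sum_ge \<mu> \<phi> \<psi> r p = (case p of (x, y) \<Rightarrow>
     (1/2) * (\<integral>z. indicator {z. r \<le> norm z} z *
        ((\<phi> (x, y + z) - \<phi> (x, y)) * (\<psi> (x + z, y + z) - \<psi> (x, y))) \<partial>\<mu>))"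

definition L1_limit_at0 :: "(real \<Rightarrow> 'b::euclidean_space \<Rightarrow> real) \<Rightarrow> ('b \<Rightarrow> real) \<Rightarrow> bool" where
  "L1_limit_at0 F B \<longleftrightarrow>
     integrable lborel B \<and>
     (\<forall>\<^sub>F r in at_right 0. integrable lborel (F r)) \<and>
     ((\<lambda>r. \<integral>\<^sup>+ p. ennreal \<bar>F r p - B p\<bar> \<partial>lborel) \<longlongrightarrow> 0) (at_right 0)"

end

theory Submission
  imports Defs
begin

lemma meas_comp:
  fixes \<phi> :: "'b::topological_space \<Rightarrow> real" and g :: "'c::topological_space \<Rightarrow> 'b"
  assumes "\<phi> \<in> borel_measurable borel" "continuous_on UNIV g"
  shows "(\<lambda>x. \<phi> (g x)) \<in> borel_measurable borel"
  using measurable_compose[OF borel_measurable_continuous_onI[OF assms(2)] assms(1)] by simp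

lemma lborel_shift_integral:
  fixes g :: "'a::euclidean_space \<Rightarrow> real"
  assumes "g \<in> borel_measurable borel"
  shows "(\<integral>p. g (c + p) \<partial>lborel) = (\<integral>p. g p \<partial>lborel)"
proof -
  have "(\<integral>p. g p \<partial>lborel) = (\<integral>p. g p \<partial>distr lborel borel ((+) c))" by (simp add: lborel_distr_plus)
  also have "\<dots> = (\<integral>p. g (c + p) \<partial>lborel)" by (rule integral_distr) (auto simp: assms)
  finally show ?thesis ..
qed

lemma lborel_shift_integrable:
  fixes g :: "'a::euclidean_space \<Rightarrow> real"
  assumes "g \<in> borel_measurable borel" "integrable lborel g"
  shows "integrable lborel (\<lambda>p. g (c + p))"
  using integrable_distr_eq[of "(+) c" lborel borel g] assms by (simp add: lborel_distr_plus)

lemma integrable_cs: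
  fixes \<psi> :: "'b::euclidean_space \<Rightarrow> real"
  assumes "\<psi> \<in> borel_measurable borel" "bounded (range \<psi>)" "compact K" "\<forall>p. p \<notin> K \<longrightarrow> \<psi> p = 0"
  shows "integrable lborel \<psi>"
proof -
  obtain M where M: "\<forall>p. \<bar>\<psi> p\<bar> \<le> M" using assms(2) by (auto simp: bounded_iff)
  have Ks: "K \<in> sets lborel" using assms(3) by (simp add: compact_imp_closed borel_closed)
  have "emeasure lborel K < \<infinity>" by (rule emeasure_bounded_finite[OF compact_imp_bounded[OF assms(3)]])
  then have "integrable lborel (\<lambda>p. M * indicator K p)" using Ks by simp
  then show ?thesis
    by (rule Bochner_Integration.integrable_bound) (use assms M in \<open>auto simp: indicator_def intro!: AE_I2 order_trans[OF _ abs_ge_self]\<close>)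
qed

lemma sets_pair_borel:
  fixes \<nu> :: "'a::euclidean_space measure"
  assumes "sets \<nu> = sets borel"
  shows "sets (\<nu> \<Otimes>\<^sub>M (lborel :: ('b::euclidean_space) measure)) = sets (borel :: ('a \<times> 'b) measure)"
proof -
  have "sets (\<nu> \<Otimes>\<^sub>M (lborel :: 'b measure)) = sets (borel \<Otimes>\<^sub>M (borel :: 'b measure))"
    by (rule sets_pair_measure_cong) (simp_all add: assms)
  then show ?thesis by (metis borel_prod)
qed

lemma integ_prod:
  fixes \<nu> :: "'a::euclidean_space measure" and \<psi> :: "'b::euclidean_space \<Rightarrow> real"
    and G :: "'a \<times> 'b \<Rightarrow> real" and s :: "'a \<Rightarrow> 'b"
  assumes fin: "finite_measure \<nu>" and sets: "sets \<nu> = sets borel"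
    and Gm: "G \<in> borel_measurable borel"
    and Gb: "\<And>z p. \<bar>G (z,p)\<bar> \<le> C * (\<bar>\<psi> (s z + p)\<bar> + \<bar>\<psi> p\<bar>)"
    and \<psi>m: "\<psi> \<in> borel_measurable borel" and \<psi>i: "integrable lborel \<psi>"
  shows "integrable (\<nu> \<Otimes>\<^sub>M lborel) G"
proof -
  interpret finite_measure \<nu> by (rule fin)
  interpret pair_sigma_finite \<nu> lborel by unfold_locales
  have Gm': "G \<in> borel_measurable (\<nu> \<Otimes>\<^sub>M lborel)"
    using Gm measurable_cong_sets[OF sets_pair_borel[OF sets] refl] by blast
  have ai: "integrable lborel (\<lambda>p. \<bar>\<psi> p\<bar>)" using \<psi>i by simp
  have si: "integrable lborel (\<lambda>p. \<bar>\<psi> (s z + p)\<bar>)" for z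
    using lborel_shift_integrable[of "\<lambda>p. \<bar>\<psi> p\<bar>", OF _ ai] \<psi>m by simp
  have bi: "integrable lborel (\<lambda>p. C * (\<bar>\<psi> (s z + p)\<bar> + \<bar>\<psi> p\<bar>))" for z
    using si ai by simp
  have Gzm: "(\<lambda>p. G (z, p)) \<in> borel_measurable borel" for z
    by (rule meas_comp[OF Gm]) (intro continuous_intros)
  have i2: "integrable lborel (\<lambda>p. G (z, p))" for z
    by (rule Bochner_Integration.integrable_bound[OF bi[of z]]) (use Gzm Gb in \<open>auto intro!: AE_I2 order_trans[OF _ abs_ge_self]\<close>)
  show ?thesis
  proof (rule Fubini_integrable[OF Gm'])
    show "AE x in \<nu>. integrable lborel (\<lambda>y. G (x, y))" using i2 by simp
    have "(\<lambda>z. \<integral>p. norm (G (z, p)) \<partial>lborel) \<in> borel_measurable \<nu>"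
      proof (rule lborel.borel_measurable_lebesgue_integral[of "\<lambda>z p. norm (G (z, p))" \<nu>])
        have "(\<lambda>x. norm (G x)) \<in> borel_measurable (\<nu> \<Otimes>\<^sub>M lborel)" using measurable_compose[OF Gm' borel_measurable_norm] by simp
        then show "(\<lambda>(z, p). norm (G (z, p))) \<in> borel_measurable (\<nu> \<Otimes>\<^sub>M lborel)" by (simp add: case_prod_beta')
      qed
    moreover have "norm (\<integral>p. norm (G (z, p)) \<partial>lborel) \<le> 2 * \<bar>C\<bar> * (\<integral>p. \<bar>\<psi> p\<bar> \<partial>lborel)" for z
    proof -
      have "norm (\<integral>p. norm (G (z, p)) \<partial>lborel) = (\<integral>p. norm (G (z, p)) \<partial>lborel)"
        by (simp add: integral_nonneg_AE)
      also have "\<dots> \<le> (\<integral>p. C * (\<bar>\<psi> (s z + p)\<bar> + \<bar>\<psi> p\<bar>) \<partial>lborel)"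
        by (rule integral_mono[OF _ bi]) (use i2 Gb in auto)
      also have "\<dots> = C * ((\<integral>p. \<bar>\<psi> (s z + p)\<bar> \<partial>lborel) + (\<integral>p. \<bar>\<psi> p\<bar> \<partial>lborel))"
        using si ai by simp
      also have "\<dots> = C * (2 * (\<integral>p. \<bar>\<psi> p\<bar> \<partial>lborel))"
        using lborel_shift_integral[of "\<lambda>p. \<bar>\<psi> p\<bar>" "s z"] \<psi>m by simp
      also have "\<dots> \<le> 2 * \<bar>C\<bar> * (\<integral>p. \<bar>\<psi> p\<bar> \<partial>lborel)"
      proof -
        have "0 \<le> (\<integral>p. \<bar>\<psi> p\<bar> \<partial>lborel)" by (rule integral_nonneg_AE) simp
        then show ?thesis by (simp add: mult_right_mono)
      qed
      finally show ?thesis .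
    qed
    ultimately show "integrable \<nu> (\<lambda>z. \<integral>p. norm (G (z, p)) \<partial>lborel)"
      by (intro integrable_const_bound) auto
  qed
qed

lemma pair_shift: "(z::'a::ab_semigroup_add, z) + p = (fst p + z, snd p + z)"
  by (simp add: prod_eq_iff add.commute[of z])

lemma core:
  fixes \<mu> :: "'a::euclidean_space measure" and \<phi> \<psi> :: "'a \<times> 'a \<Rightarrow> real"
  assumes sets: "sets \<mu> = sets borel" and sym: "distr \<mu> borel uminus = \<mu>"
    and fin: "emeasure \<mu> {z. r \<le> norm z} < \<infinity>"
    and \<phi>m: "\<phi> \<in> borel_measurable borel" and \<psi>m: "\<psi> \<in> borel_measurable borel"
    and \<phi>b: "\<forall>p. \<bar>\<phi> p\<bar> \<le> M" and \<psi>i: "integrable lborel \<psi>"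
  shows "(\<integral>p. (\<integral>z. indicator {z. r \<le> norm z} z *
            ((\<phi> (fst p + z, snd p + z) - \<phi> (fst p, snd p + z)) * (\<psi> (fst p + z, snd p + z) - \<psi> p)) \<partial>\<mu>) \<partial>lborel)
       = (\<integral>p. (\<integral>z. indicator {z. r \<le> norm z} z *
            ((\<phi> (fst p + z, snd p) - \<phi> p) * (\<psi> (fst p + z, snd p + z) - \<psi> p)) \<partial>\<mu>) \<partial>lborel)"
proof -
  define S where "S = {z::'a. r \<le> norm z}"
  define \<nu> where "\<nu> = density \<mu> (\<lambda>z. ennreal (indicator S z))"
  define A where "A p z = (\<phi> (fst p + z, snd p + z) - \<phi> (fst p, snd p + z)) * (\<psi> (fst p + z, snd p + z) - \<psi> p)" for p z
  define E where "E p z = (\<phi> (fst p + z, snd p) - \<phi> p) * (\<psi> (fst p + z, snd p + z) - \<psi> p)" for p z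
  have Sb: "S \<in> sets borel" unfolding S_def by measurable
  have meq: "measurable \<mu> (borel::real measure) = measurable borel borel"
    by (rule measurable_cong_sets[OF sets refl])
  have indm: "(\<lambda>z. indicator S z :: real) \<in> borel_measurable borel" using Sb by simp
  have nu_int: "(\<integral>z. indicator S z * g z \<partial>\<mu>) = (\<integral>z. g z \<partial>\<nu>)" if g: "g \<in> borel_measurable borel" for g :: "'a \<Rightarrow> real"
    unfolding \<nu>_def
    using integral_density[of g \<mu> "\<lambda>z. indicator S z"] g indm meq by simp
  have setsnu: "sets \<nu> = sets borel" unfolding \<nu>_def by (simp add: sets)
  have "emeasure \<nu> (space \<nu>) = emeasure \<mu> S"
    unfolding \<nu>_def using Sb sets
    by (simp add: emeasure_density nn_integral_indicator sets_eq_imp_space_eq ennreal_indicator)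
  then have finnu: "finite_measure \<nu>" using fin unfolding S_def by (intro finite_measureI) simp
  interpret finite_measure \<nu> by (rule finnu)
  interpret pair_sigma_finite \<nu> lborel by unfold_locales
  have Am: "(\<lambda>x. A (snd x) (fst x)) \<in> borel_measurable borel"
    unfolding A_def
    by (intro borel_measurable_times borel_measurable_diff meas_comp[OF \<phi>m] meas_comp[OF \<psi>m]; intro continuous_intros)
  have Em: "(\<lambda>x. E (snd x) (fst x)) \<in> borel_measurable borel"
    unfolding E_def
    by (intro borel_measurable_times borel_measurable_diff meas_comp[OF \<phi>m] meas_comp[OF \<psi>m]; intro continuous_intros)
  have Apm: "(\<lambda>z. A p z) \<in> borel_measurable borel" for p
    using meas_comp[OF Am, of "\<lambda>z. (z, p)"] by (simp add: continuous_intros)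
  have Epm: "(\<lambda>z. E p z) \<in> borel_measurable borel" for p
    using meas_comp[OF Em, of "\<lambda>z. (z, p)"] by (simp add: continuous_intros)
  have Azm: "(\<lambda>p. A p z) \<in> borel_measurable borel" for z
    using meas_comp[OF Am, of "\<lambda>p. (z, p)"] by (simp add: continuous_intros)
  have Ezm: "(\<lambda>p. E p z) \<in> borel_measurable borel" for z
    using meas_comp[OF Em, of "\<lambda>p. (z, p)"] by (simp add: continuous_intros)
  have bnd: "\<bar>(u - v) * (\<psi> ((z,z) + p) - \<psi> p)\<bar> \<le> (2*M) * (\<bar>\<psi> ((z,z) + p)\<bar> + \<bar>\<psi> p\<bar>)"
    if "\<bar>u\<bar> \<le> M" "\<bar>v\<bar> \<le> M" for u v z p
  proof -
    have "\<bar>(u - v) * (\<psi> ((z,z) + p) - \<psi> p)\<bar> = \<bar>u - v\<bar> * \<bar>\<psi> ((z,z) + p) - \<psi> p\<bar>" by (simp add: abs_mult)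
    also have "\<dots> \<le> (2*M) * (\<bar>\<psi> ((z,z) + p)\<bar> + \<bar>\<psi> p\<bar>)"
      by (rule mult_mono) (use that in auto)
    finally show ?thesis .
  qed
  have Ai: "integrable (\<nu> \<Otimes>\<^sub>M lborel) (\<lambda>(z, p). A p z)"
  proof (rule integ_prod[OF finnu setsnu _ _ \<psi>m \<psi>i, where s="\<lambda>z. (z,z)" and C="2*M"])
    show "(\<lambda>(z, p). A p z) \<in> borel_measurable borel" using Am by (simp add: case_prod_beta')
    show "\<bar>case (z, p) of (z, p) \<Rightarrow> A p z\<bar> \<le> 2 * M * (\<bar>\<psi> ((z, z) + p)\<bar> + \<bar>\<psi> p\<bar>)" for z p
      unfolding A_def pair_shift[symmetric] by (simp only: prod.case, rule bnd; metis \<phi>b)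
  qed
  have Ei: "integrable (\<nu> \<Otimes>\<^sub>M lborel) (\<lambda>(z, p). E p z)"
  proof (rule integ_prod[OF finnu setsnu _ _ \<psi>m \<psi>i, where s="\<lambda>z. (z,z)" and C="2*M"])
    show "(\<lambda>(z, p). E p z) \<in> borel_measurable borel" using Em by (simp add: case_prod_beta')
    show "\<bar>case (z, p) of (z, p) \<Rightarrow> E p z\<bar> \<le> 2 * M * (\<bar>\<psi> ((z, z) + p)\<bar> + \<bar>\<psi> p\<bar>)" for z p
      unfolding E_def pair_shift[symmetric] by (simp only: prod.case, rule bnd; metis \<phi>b)
  qed
  define h where "h z = (\<integral>p. E p z \<partial>lborel)" for z
  have hm: "h \<in> borel_measurable borel"
    unfolding h_def
  proof (rule lborel.borel_measurable_lebesgue_integral[of "\<lambda>z p. E p z" borel])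
    show "(\<lambda>(z, p). E p z) \<in> borel_measurable (borel \<Otimes>\<^sub>M lborel)"
    proof -
      have "sets (borel \<Otimes>\<^sub>M (lborel::('a\<times>'a) measure)) = sets (borel :: ('a \<times> ('a\<times>'a)) measure)"
        by (rule sets_pair_borel) simp
      from measurable_cong_sets[OF this refl, of "borel::real measure"] Em
      show ?thesis by (simp add: case_prod_beta')
    qed
  qed
  have shift: "(\<integral>p. A p z \<partial>lborel) = h (- z)" for z
  proof -
    have "(\<integral>p. A p z \<partial>lborel) = (\<integral>p. A ((-z,-z) + p) z \<partial>lborel)"
      using lborel_shift_integral[OF Azm[of z], of "(-z,-z)"] by simp
    also have "\<dots> = h (-z)" unfolding h_def A_def E_def
      by (rule Bochner_Integration.integral_cong) (auto simp: algebra_simps)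
    finally show ?thesis .
  qed
  have symm: "(\<integral>z. h (- z) \<partial>\<nu>) = (\<integral>z. h z \<partial>\<nu>)"
  proof -
    have "(\<integral>z. h (- z) \<partial>\<nu>) = (\<integral>z. indicator S z * h (- z) \<partial>\<mu>)"
      by (rule nu_int[symmetric]) (rule meas_comp[OF hm]; intro continuous_intros)
    also have "\<dots> = (\<integral>z. indicator S (-z) * h (- z) \<partial>\<mu>)"
      unfolding S_def by (simp add: indicator_def)
    also have "\<dots> = (\<integral>z. indicator S z * h z \<partial>distr \<mu> borel uminus)"
    proof -
      have "measurable \<mu> (borel::'a measure) = measurable borel borel"
        by (rule measurable_cong_sets[OF sets refl])
      then have um: "uminus \<in> measurable \<mu> (borel::'a measure)" by simp
      show ?thesis by (rule integral_distr[OF um, symmetric]) (use hm indm in auto)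
    qed
    also have "\<dots> = (\<integral>z. indicator S z * h z \<partial>\<mu>)" by (simp add: sym)
    also have "\<dots> = (\<integral>z. h z \<partial>\<nu>)" by (rule nu_int[OF hm])
    finally show ?thesis .
  qed
  have "(\<integral>p. (\<integral>z. indicator S z * A p z \<partial>\<mu>) \<partial>lborel) = (\<integral>p. (\<integral>z. A p z \<partial>\<nu>) \<partial>lborel)"
    using nu_int[OF Apm] by simp
  also have "\<dots> = (\<integral>z. (\<integral>p. A p z \<partial>lborel) \<partial>\<nu>)"
    using Fubini_integral[of "\<lambda>z p. A p z"] Ai by simp
  also have "\<dots> = (\<integral>z. h (-z) \<partial>\<nu>)" by (simp add: shift)
  also have "\<dots> = (\<integral>z. h z \<partial>\<nu>)" by (rule symm)
  also have "\<dots> = (\<integral>p. (\<integral>z. E p z \<partial>\<nu>) \<partial>lborel)"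
    unfolding h_def using Fubini_integral[of "\<lambda>z p. E p z"] Ei by simp
  also have "\<dots> = (\<integral>p. (\<integral>z. indicator S z * E p z \<partial>\<mu>) \<partial>lborel)"
    using nu_int[OF Epm] by simp
  finally show ?thesis unfolding A_def E_def S_def .
qed

lemma L1_int_lim:
  assumes "L1_limit_at0 F B"
  shows "((\<lambda>r. \<integral>p. F r p \<partial>lborel) \<longlongrightarrow> (\<integral>p. B p \<partial>lborel)) (at_right 0)"
proof -
  have Bi: "integrable lborel B" and ev: "\<forall>\<^sub>F r in at_right 0. integrable lborel (F r)"
    and lim: "((\<lambda>r. \<integral>\<^sup>+ p. ennreal \<bar>F r p - B p\<bar> \<partial>lborel) \<longlongrightarrow> 0) (at_right 0)"
    using assms unfolding L1_limit_at0_def by auto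
  have le: "\<forall>\<^sub>F r in at_right 0. ennreal \<bar>(\<integral>p. F r p \<partial>lborel) - (\<integral>p. B p \<partial>lborel)\<bar>
              \<le> (\<integral>\<^sup>+ p. ennreal \<bar>F r p - B p\<bar> \<partial>lborel)"
    using ev
  proof eventually_elim
    case (elim r)
    have "integrable lborel (\<lambda>p. F r p - B p)" using elim Bi by simp
    from integral_norm_bound_ennreal[OF this]
    show ?case using elim Bi by simp
  qed
  have "((\<lambda>r. ennreal \<bar>(\<integral>p. F r p \<partial>lborel) - (\<integral>p. B p \<partial>lborel)\<bar>) \<longlongrightarrow> 0) (at_right 0)"
    by (rule tendsto_sandwich[OF _ le tendsto_const lim]) simp
  then have "((\<lambda>r. \<bar>(\<integral>p. F r p \<partial>lborel) - (\<integral>p. B p \<partial>lborel)\<bar>) \<longlongrightarrow> 0) (at_right 0)"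
    using tendsto_ennreal_iff[of "\<lambda>r. \<bar>(\<integral>p. F r p \<partial>lborel) - (\<integral>p. B p \<partial>lborel)\<bar>" "at_right 0" 0]
    by simp
  then show ?thesis
    by (simp add: tendsto_rabs_zero_iff LIM_zero_iff)
qed

lemma ind_integrable:
  fixes \<mu> :: "'a::euclidean_space measure" and g :: "'a \<Rightarrow> real"
  assumes sets: "sets \<mu> = sets borel" and fin: "emeasure \<mu> {z. r \<le> norm z} < \<infinity>"
    and g: "g \<in> borel_measurable borel" and gb: "\<And>z. \<bar>g z\<bar> \<le> C"
  shows "integrable \<mu> (\<lambda>z. indicator {z. r \<le> norm z} z * g z)"
proof -
  have Sb: "{z::'a. r \<le> norm z} \<in> sets \<mu>" unfolding sets by measurable
  have I: "integrable \<mu> (\<lambda>z. C * indicator {z::'a. r \<le> norm z} z)" using integrable_real_indicator[OF Sb fin] by simp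
  have mm: "measurable \<mu> (borel::real measure) = measurable borel borel"
    by (rule measurable_cong_sets[OF sets refl])
  have Sb': "{z::'a. r \<le> norm z} \<in> sets borel" using Sb sets by simp
  have M: "(\<lambda>z. indicator {z. r \<le> norm z} z * g z) \<in> borel_measurable borel"
    using g Sb' by (intro borel_measurable_times borel_measurable_indicator)
  have A: "AE x in \<mu>. norm (indicator {z. r \<le> norm z} x * g x) \<le> norm (C * indicator {z::'a. r \<le> norm z} x)"
  proof (rule AE_I2)
    fix x show "norm (indicator {z. r \<le> norm z} x * g x) \<le> norm (C * indicator {z::'a. r \<le> norm z} x)"
      using gb[of x] by (auto simp: indicator_def)
  qed
  show ?thesis
    by (rule Bochner_Integration.integrable_bound[OF I _ A]) (use M mm in simp)
qed

lemma levy_fin: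
  fixes \<mu> :: "'a::euclidean_space measure"
  assumes "levy_measure \<mu>" "0 < r"
  shows "emeasure \<mu> {z. r \<le> norm z} < \<infinity>"
proof -
  have sets: "sets \<mu> = sets borel" and I: "integrable \<mu> (\<lambda>z. min ((norm z)\<^sup>2) 1)"
    using assms(1) unfolding levy_measure_def by auto
  define m where "m = min (r\<^sup>2) 1"
  have m0: "0 < m" unfolding m_def using assms(2) by simp
  have Sb: "{z::'a. r \<le> norm z} \<in> sets \<mu>" unfolding sets by measurable
  have "integrable \<mu> (indicator {z::'a. r \<le> norm z} :: 'a \<Rightarrow> real)"
  proof (rule Bochner_Integration.integrable_bound)
    show "integrable \<mu> (\<lambda>z. min ((norm z)\<^sup>2) 1 / m)" using I by simp
    show "(indicator {z::'a. r \<le> norm z} :: 'a \<Rightarrow> real) \<in> borel_measurable \<mu>" using Sb by simp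
    have "indicator {z::'a. r \<le> norm z} x \<le> min ((norm x)\<^sup>2) 1 / m" for x
    proof (cases "r \<le> norm x")
      case True
      then have "r\<^sup>2 \<le> (norm x)\<^sup>2" using assms(2) by (intro power_mono) auto
      then have "m \<le> min ((norm x)\<^sup>2) 1" unfolding m_def by auto
      then show ?thesis using True m0 by (simp add: field_simps)
    qed (use m0 in simp)
    then show "AE x in \<mu>. norm (indicator {z::'a. r \<le> norm z} x :: real) \<le> norm (min ((norm x)\<^sup>2) 1 / m)"
      using m0 by (intro AE_I2) (auto simp: indicator_def)
  qed
  then show ?thesis using sets by (simp add: integrable_indicator_iff sets_eq_imp_space_eq)
qed

lemma bnd4:
  fixes a b c d :: real
  assumes "\<bar>a\<bar> \<le> M1" "\<bar>b\<bar> \<le> M1" "\<bar>c\<bar> \<le> M2" "\<bar>d\<bar> \<le> M2"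
  shows "\<bar>(a - b) * (c - d)\<bar> \<le> (2*M1) * (2*M2)"
proof -
  have "\<bar>(a - b) * (c - d)\<bar> = \<bar>a - b\<bar> * \<bar>c - d\<bar>" by (simp add: abs_mult)
  also have "\<dots> \<le> (2*M1) * (2*M2)" by (rule mult_mono) (use assms in auto)
  finally show ?thesis .
qed

lemma integ4:
  fixes \<mu> :: "'a::euclidean_space measure" and \<phi> \<psi> :: "'a \<times> 'a \<Rightarrow> real"
  assumes sets: "sets \<mu> = sets borel" and fin: "emeasure \<mu> {z. r \<le> norm z} < \<infinity>"
    and \<phi>m: "\<phi> \<in> borel_measurable borel" and \<psi>m: "\<psi> \<in> borel_measurable borel"
    and \<phi>b: "\<forall>p. \<bar>\<phi> p\<bar> \<le> M1" and \<psi>b: "\<forall>p. \<bar>\<psi> p\<bar> \<le> M2"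
    and c: "continuous_on UNIV g1" "continuous_on UNIV g2" "continuous_on UNIV g3" "continuous_on UNIV g4"
  shows "integrable \<mu> (\<lambda>z. indicator {z. r \<le> norm z} z * ((\<phi> (g1 z) - \<phi> (g2 z)) * (\<psi> (g3 z) - \<psi> (g4 z))))"
proof (rule ind_integrable[OF sets fin])
  show "(\<lambda>z. (\<phi> (g1 z) - \<phi> (g2 z)) * (\<psi> (g3 z) - \<psi> (g4 z))) \<in> borel_measurable borel"
    by (intro borel_measurable_times borel_measurable_diff meas_comp[OF \<phi>m] meas_comp[OF \<psi>m] c)
  show "\<bar>(\<phi> (g1 z) - \<phi> (g2 z)) * (\<psi> (g3 z) - \<psi> (g4 z))\<bar> \<le> (2*M1)*(2*M2)" for z
    by (rule bnd4; simp add: \<phi>b \<psi>b)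
qed

theorem mainTheorem20:
  fixes \<mu> :: "'a::euclidean_space measure"
    and \<phi> \<psi> :: "'a \<times> 'a \<Rightarrow> real"
    and B1 B2 B3 :: "'a \<times> 'a \<Rightarrow> real"
  assumes "levy_measure \<mu>"
    and "\<phi> \<in> borel_measurable borel" and "bounded (range \<phi>)"
    and "\<psi> \<in> borel_measurable borel" and "bounded (range \<psi>)"
    and "\<exists>K. compact K \<and> (\<forall>p. p \<notin> K \<longrightarrow> \<psi> p = 0)"
    and "L1_limit_at0 (B_sum_ge \<mu> \<phi> \<psi>) B1"
    and "L1_limit_at0 (B_x_sum_ge \<mu> \<phi> \<psi>) B2"
    and "L1_limit_at0 (B_y_sum_ge \<mu> \<phi> \<psi>) B3"
  shows "(\<integral>p. B1 p \<partial>lborel) = (\<integral>p. B2 p + B3 p \<partial>lborel)"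
proof -
  have sets: "sets \<mu> = sets borel" and sym: "distr \<mu> borel uminus = \<mu>"
    using assms(1) unfolding levy_measure_def by auto
  have \<phi>m: "\<phi> \<in> borel_measurable borel" and \<psi>m: "\<psi> \<in> borel_measurable borel" using assms by auto
  obtain M1 where \<phi>b: "\<forall>p. \<bar>\<phi> p\<bar> \<le> M1" using assms(3) by (auto simp: bounded_iff)
  obtain M2 where \<psi>b: "\<forall>p. \<bar>\<psi> p\<bar> \<le> M2" using assms(5) by (auto simp: bounded_iff)
  obtain K where K: "compact K" "\<forall>p. p \<notin> K \<longrightarrow> \<psi> p = 0" using assms(6) by auto
  have \<psi>i: "integrable lborel \<psi>" by (rule integrable_cs[OF \<psi>m assms(5) K])
  have key: "(\<integral>p. B_sum_ge \<mu> \<phi> \<psi> r p \<partial>lborel) = (\<integral>p. B_x_sum_ge \<mu> \<phi> \<psi> r p \<partial>lborel) + (\<integral>p. B_y_sum_ge \<mu> \<phi> \<psi> r p \<partial>lborel)"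
    if r: "0 < r" and i1: "integrable lborel (B_sum_ge \<mu> \<phi> \<psi> r)"
      and i2: "integrable lborel (B_x_sum_ge \<mu> \<phi> \<psi> r)" and i3: "integrable lborel (B_y_sum_ge \<mu> \<phi> \<psi> r)" for r
  proof -
    have fin: "emeasure \<mu> {z. r \<le> norm z} < \<infinity>" by (rule levy_fin[OF assms(1) r])
    note I4 = integ4[OF sets fin \<phi>m \<psi>m \<phi>b \<psi>b]
    have eqA: "(\<integral>z. indicator {z. r \<le> norm z} z *
            ((\<phi> (fst p + z, snd p + z) - \<phi> (fst p, snd p + z)) * (\<psi> (fst p + z, snd p + z) - \<psi> p)) \<partial>\<mu>)
          = 2 * B_sum_ge \<mu> \<phi> \<psi> r p - 2 * B_y_sum_ge \<mu> \<phi> \<psi> r p" for p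
    proof (cases p)
      case (Pair x y)
      have ia: "integrable \<mu> (\<lambda>z. indicator {z. r \<le> norm z} z *
            ((\<phi> (x + z, y + z) - \<phi> (x, y + z)) * (\<psi> (x + z, y + z) - \<psi> (x, y))))"
        by (rule I4) (intro continuous_intros)+
      have ib: "integrable \<mu> (\<lambda>z. indicator {z. r \<le> norm z} z *
            ((\<phi> (x, y + z) - \<phi> (x, y)) * (\<psi> (x + z, y + z) - \<psi> (x, y))))"
        by (rule I4) (intro continuous_intros)+
      have "(\<integral>z. indicator {z. r \<le> norm z} z * ((\<phi> (x + z, y + z) - \<phi> (x, y)) * (\<psi> (x + z, y + z) - \<psi> (x, y))) \<partial>\<mu>)
          = (\<integral>z. indicator {z. r \<le> norm z} z * ((\<phi> (x + z, y + z) - \<phi> (x, y + z)) * (\<psi> (x + z, y + z) - \<psi> (x, y)))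
              + indicator {z. r \<le> norm z} z * ((\<phi> (x, y + z) - \<phi> (x, y)) * (\<psi> (x + z, y + z) - \<psi> (x, y))) \<partial>\<mu>)"
        by (rule Bochner_Integration.integral_cong) (simp_all add: algebra_simps)
      also have "\<dots> = (\<integral>z. indicator {z. r \<le> norm z} z * ((\<phi> (x + z, y + z) - \<phi> (x, y + z)) * (\<psi> (x + z, y + z) - \<psi> (x, y))) \<partial>\<mu>)
              + (\<integral>z. indicator {z. r \<le> norm z} z * ((\<phi> (x, y + z) - \<phi> (x, y)) * (\<psi> (x + z, y + z) - \<psi> (x, y))) \<partial>\<mu>)"
        by (rule Bochner_Integration.integral_add[OF ia ib])
      finally show ?thesis unfolding Pair B_sum_ge_def B_y_sum_ge_def by (simp only: prod.case fst_conv snd_conv) (simp add: algebra_simps)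
    qed
    have eqE: "(\<integral>z. indicator {z. r \<le> norm z} z *
            ((\<phi> (fst p + z, snd p) - \<phi> p) * (\<psi> (fst p + z, snd p + z) - \<psi> p)) \<partial>\<mu>)
          = 2 * B_x_sum_ge \<mu> \<phi> \<psi> r p" for p
      by (cases p) (simp add: B_x_sum_ge_def)
    have "(\<integral>p. 2 * B_sum_ge \<mu> \<phi> \<psi> r p - 2 * B_y_sum_ge \<mu> \<phi> \<psi> r p \<partial>lborel) = (\<integral>p. 2 * B_x_sum_ge \<mu> \<phi> \<psi> r p \<partial>lborel)"
      using core[OF sets sym fin \<phi>m \<psi>m \<phi>b \<psi>i] unfolding eqA eqE .
    then show ?thesis using i1 i2 i3 by simp
  qed
  have ev: "\<forall>\<^sub>F r in at_right 0. (\<integral>p. B_sum_ge \<mu> \<phi> \<psi> r p \<partial>lborel) = (\<integral>p. B_x_sum_ge \<mu> \<phi> \<psi> r p \<partial>lborel) + (\<integral>p. B_y_sum_ge \<mu> \<phi> \<psi> r p \<partial>lborel)"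
  proof -
    have "\<forall>\<^sub>F r in at_right (0::real). 0 < r" by (simp add: eventually_at_right_less)
    moreover have "\<forall>\<^sub>F r in at_right 0. integrable lborel (B_sum_ge \<mu> \<phi> \<psi> r)"
      using assms(7) unfolding L1_limit_at0_def by auto
    moreover have "\<forall>\<^sub>F r in at_right 0. integrable lborel (B_x_sum_ge \<mu> \<phi> \<psi> r)"
      using assms(8) unfolding L1_limit_at0_def by auto
    moreover have "\<forall>\<^sub>F r in at_right 0. integrable lborel (B_y_sum_ge \<mu> \<phi> \<psi> r)"
      using assms(9) unfolding L1_limit_at0_def by auto
    ultimately show ?thesis by eventually_elim (rule key)
  qed
  have l1: "((\<lambda>r. \<integral>p. B_sum_ge \<mu> \<phi> \<psi> r p \<partial>lborel) \<longlongrightarrow> (\<integral>p. B1 p \<partial>lborel)) (at_right 0)"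
    by (rule L1_int_lim[OF assms(7)])
  have l23: "((\<lambda>r. \<integral>p. B_sum_ge \<mu> \<phi> \<psi> r p \<partial>lborel) \<longlongrightarrow> (\<integral>p. B2 p \<partial>lborel) + (\<integral>p. B3 p \<partial>lborel)) (at_right 0)"
  proof (rule Lim_transform_eventually[OF tendsto_add[OF L1_int_lim[OF assms(8)] L1_int_lim[OF assms(9)]]])
    show "\<forall>\<^sub>F r in at_right 0. (\<integral>p. B_x_sum_ge \<mu> \<phi> \<psi> r p \<partial>lborel) + (\<integral>p. B_y_sum_ge \<mu> \<phi> \<psi> r p \<partial>lborel) = (\<integral>p. B_sum_ge \<mu> \<phi> \<psi> r p \<partial>lborel)"
      using ev by (rule eventually_mono) simp
  qed
  have "(\<integral>p. B1 p \<partial>lborel) = (\<integral>p. B2 p \<partial>lborel) + (\<integral>p. B3 p \<partial>lborel)"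
    using tendsto_unique[OF trivial_limit_at_right_real l1 l23] .
  moreover have "integrable lborel B2" "integrable lborel B3"
    using assms(8,9) unfolding L1_limit_at0_def by auto
  ultimately show ?thesis by simp
qed

end
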